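(* Let $\sigma$ be the involution of $\operatorname{Hilb}^m(S_\tau)$ induced by $(u,v,z)\mapsto(u,-v,z)$ on $S_\tau$. Then the Lagrangians $\mathcal{K}=\Sigma_{\alpha_1}\times\dots\times\Sigma_{\alpha_m}$ and $\mathcal{K}'=\Sigma_{\beta_1}\times\dots\times\Sigma_{\beta_m}$ in $\mathcal{Y}_{m,\tau}\subset\operatorname{Hilb}^m(S_\tau)$ are mapped into themselves by $\sigma$, and the fixed point sets of $\sigma|_{\mathcal{K}}$ and $\sigma|_{\mathcal{K}'}$ are the tori $\mathbb{T}_{\hat\alpha}=\hat\alpha_1\times\dots\times\hat\alpha_m$ and $\mathbb{T}_{\hat\beta}=\hat\beta_1\times\dots\times\hat\beta_m$, respectively, which lie in $\operatorname{Sym}^m(\hat S_\tau)\setminus\nabla$.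
   Context: $\tau$ is a set of $2m$ distinct complex numbers with sum $0$, $P_\tau(z)=\prod_{\mu\in\tau}(z-\mu)$, $S_\tau=\{u^2+v^2+P_\tau(z)=0\}\subset\mathbb{C}^3$, $\hat S_\tau=\{(u,z)\in\mathbb{C}^2:u^2+P_\tau(z)=0\}$ (the fixed curve of $(u,v,z)\mapsto(u,-v,z)$), and $\operatorname{Sym}^m(\hat S_\tau)=\operatorname{Hilb}^m(\hat S_\tau)\subset\operatorname{Hilb}^m(S_\tau)$. $\nabla\subset\operatorname{Sym}^m(\hat S_\tau)$ is the anti-diagonal: unordered tuples $\{(u_k,z_k)\}$ with $(u_i,z_i)=(-u_j,z_j)$ for some $i\ne j$. $\alpha_1,\dots,\alpha_m$ and $\beta_1,\dots,\beta_m$ are two crossingless matchings of $\tau$ (each a family of $m$ pairwise disjoint embedded arcs joining the points of $\tau$ in pairs). For an arc $\delta$, $\Sigma_\delta=\{(u,v,z)\in S_\tau: z\in\delta,\ u,v\in\sqrt{-P_\tau(z)}\,\mathbb{R}\}$ and $\hat\delta=\{(u,z)\in\mathbb{C}^2: z\in\delta,\ u=\pm\sqrt{-P_\tau(z)}\}\subset\hat S_\tau$, a simple closed curve. $\mathcal{Y}_{m,\tau}$ is the variety of quadruples of polynomials $(A,B,C,D)$ ($A,D$ monic of degree $m$ with opposite subleading coefficients, $\deg B,\deg C\le m-1$) with $AD-BC=P_\tau$, embedded openly in $\operatorname{Hilb}^m(S_\tau)$ by $(A,B,C,D)\mapsto\{Q: A(t)\mid Q(\frac{B+C}2(t),\frac{B-C}{2i}(t),t)\}$;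 the products $\mathcal{K},\mathcal{K}'$ lie in the part of it identified (via Hilbert–Chow) with unordered $m$-tuples of points of $S_\tau$ with distinct $z$-coordinates. *)

theory Defs
  imports "HOL-Analysis.Analysis" "HOL-Library.Multiset"
begin

type_synonym pt3 = "complex \<times> complex \<times> complex"
type_synonym pt2 = "complex \<times> complex"

definition Ptau :: "complex set \<Rightarrow> complex \<Rightarrow> complex" where
  "Ptau \<tau> z = (\<Prod>\<mu>\<in>\<tau>. z - \<mu>)"

definition S_tau :: "complex set \<Rightarrow> pt3 set" where
  "S_tau \<tau> = {(u,v,z). u\<^sup>2 + v\<^sup>2 + Ptau \<tau> z = 0}"

definition Shat_tau :: "complex set \<Rightarrow> pt2 set" where
  "Shat_tau \<tau> = {(u,z). u\<^sup>2 + Ptau \<tau> z = 0}"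

definition crossingless_matching ::
  "complex set \<Rightarrow> nat \<Rightarrow> (nat \<Rightarrow> real \<Rightarrow> complex) \<Rightarrow> bool" where
  "crossingless_matching \<tau> m \<alpha> \<longleftrightarrow>
     (\<forall>i<m. arc (\<alpha> i) \<and> pathstart (\<alpha> i) \<in> \<tau> \<and> pathfinish (\<alpha> i) \<in> \<tau>) \<and>
     (\<forall>i<m. \<forall>j<m. i \<noteq> j \<longrightarrow> path_image (\<alpha> i) \<inter> path_image (\<alpha> j) = {}) \<and>
     \<tau> = (\<Union>i<m. {pathstart (\<alpha> i), pathfinish (\<alpha> i)})"

definition Sigma_arc :: "complex set \<Rightarrow> (real \<Rightarrow> complex) \<Rightarrow> pt3 set" where
  "Sigma_arc \<tau> \<delta> = {(u,v,z). (u,v,z) \<in> S_tau \<tau> \<and> z \<in> path_image \<delta> \<and>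
      (\<exists>c r s. c\<^sup>2 = - Ptau \<tau> z \<and> u = c * of_real r \<and> v = c * of_real s)}"

definition hat_arc :: "complex set \<Rightarrow> (real \<Rightarrow> complex) \<Rightarrow> pt2 set" where
  "hat_arc \<tau> \<delta> = {(u,z). z \<in> path_image \<delta> \<and> u\<^sup>2 = - Ptau \<tau> z}"

text \<open>Points of Hilb^m(S_tau) in the locus of m points with distinct z-coordinates,
  represented as the finite set of those points.\<close>
definition distinct_z_locus :: "complex set \<Rightarrow> nat \<Rightarrow> pt3 set set" where
  "distinct_z_locus \<tau> m = {X. finite X \<and> card X = m \<and> X \<subseteq> S_tau \<tau> \<and>
      inj_on (\<lambda>(u,v,z). z) X}"

text \<open>Product Lagrangian Sigma_{delta_1} x ... x Sigma_{delta_m} (as unordered tuples).\<close>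
definition prod_Sigma :: "complex set \<Rightarrow> nat \<Rightarrow> (nat \<Rightarrow> real \<Rightarrow> complex) \<Rightarrow> pt3 set set" where
  "prod_Sigma \<tau> m \<delta> = {p ` {..<m} | p. \<forall>i<m. p i \<in> Sigma_arc \<tau> (\<delta> i)}"

definition sigma_inv :: "pt3 set \<Rightarrow> pt3 set" where
  "sigma_inv X = (\<lambda>(u,v,z). (u, -v, z)) ` X"

definition Sym_Shat :: "complex set \<Rightarrow> nat \<Rightarrow> pt2 multiset set" where
  "Sym_Shat \<tau> m = {M. size M = m \<and> set_mset M \<subseteq> Shat_tau \<tau>}"

definition antidiag :: "nat \<Rightarrow> pt2 multiset set" where
  "antidiag m = {M. size M = m \<and> (\<exists>u z. {#(u,z), (-u,z)#} \<subseteq># M)}"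

definition torus_hat :: "complex set \<Rightarrow> nat \<Rightarrow> (nat \<Rightarrow> real \<Rightarrow> complex) \<Rightarrow> pt2 multiset set" where
  "torus_hat \<tau> m \<delta> = {mset (map q [0..<m]) | q. \<forall>i<m. q i \<in> hat_arc \<tau> (\<delta> i)}"

text \<open>Inclusion of (reduced points of) Sym^m(hat S) into Hilb^m(S): (u,z) -> (u,0,z).\<close>
definition sym_to_hilb :: "pt2 multiset \<Rightarrow> pt3 set" where
  "sym_to_hilb M = (\<lambda>(u,z). (u, 0, z)) ` set_mset M"

end

theory Submission
  imports Defs
begin

definition zc :: "pt3 \<Rightarrow> complex" where "zc x = snd (snd x)"
definition sg :: "pt3 \<Rightarrow> pt3" where "sg = (\<lambda>(u,v,z). (u, -v, z))"

lemma Sigma_z: "x \<in> Sigma_arc \<tau> d \<Longrightarrow> zc x \<in> path_image d"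
  by (auto simp: Sigma_arc_def zc_def)

lemma Sigma_S: "x \<in> Sigma_arc \<tau> d \<Longrightarrow> x \<in> S_tau \<tau>"
  by (auto simp: Sigma_arc_def)

lemma Sigma_sg: "x \<in> Sigma_arc \<tau> d \<Longrightarrow> sg x \<in> Sigma_arc \<tau> d"
proof -
  assume "x \<in> Sigma_arc \<tau> d"
  then obtain u v z c r s where x: "x = (u,v,z)" "(u,v,z) \<in> S_tau \<tau>" "z \<in> path_image d"
    "c\<^sup>2 = - Ptau \<tau> z" "u = c * of_real r" "v = c * of_real s"
    unfolding Sigma_arc_def by blast
  have "(u,-v,z) \<in> S_tau \<tau>" using x(2) by (simp add: S_tau_def)
  moreover have "-v = c * of_real (-s)" using x(6) by simp
  ultimately have "(u,-v,z) \<in> Sigma_arc \<tau> d" using x unfolding Sigma_arc_def by (simp; blast)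
  moreover have "sg x = (u,-v,z)" by (simp add: x(1) sg_def)
  ultimately show ?thesis by simp
qed

lemma sg_zc: "zc (sg x) = zc x"
  by (cases x) (auto simp: sg_def zc_def)

lemma sg_fix: "sg x = x \<longleftrightarrow> fst (snd x) = 0"
  by (cases x) (auto simp: sg_def)

lemma sigma_inv_sg: "sigma_inv X = sg ` X"
  by (simp add: sigma_inv_def sg_def)

locale disj =
  fixes m :: nat and \<delta> :: "nat \<Rightarrow> real \<Rightarrow> complex"
  assumes D: "\<And>i j. i < m \<Longrightarrow> j < m \<Longrightarrow> i \<noteq> j \<Longrightarrow> path_image (\<delta> i) \<inter> path_image (\<delta> j) = {}"
begin

lemma same_idx: "i < m \<Longrightarrow> j < m \<Longrightarrow> z \<in> path_image (\<delta> i) \<Longrightarrow> z \<in> path_image (\<delta> j) \<Longrightarrow> i = j"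
  using D by blast

lemma L1: "prod_Sigma \<tau> m \<delta> \<subseteq> distinct_z_locus \<tau> m"
proof
  fix X assume "X \<in> prod_Sigma \<tau> m \<delta>"
  then obtain p where X: "X = p ` {..<m}" and p: "\<forall>i<m. p i \<in> Sigma_arc \<tau> (\<delta> i)"
    unfolding prod_Sigma_def by blast
  have zi: "i = j" if "i < m" "j < m" "zc (p i) = zc (p j)" for i j
    using same_idx[OF that(1,2)] Sigma_z p that by metis
  have "inj_on p {..<m}" using zi by (auto simp: inj_on_def)
  hence "card X = m" using X by (simp add: card_image)
  moreover have "X \<subseteq> S_tau \<tau>" using X p Sigma_S by blast
  moreover have "inj_on (\<lambda>(u,v,z). z) X"
  proof (rule inj_onI)
    fix x y assume "x \<in> X" "y \<in> X" "(\<lambda>(u,v,z). z) x = (\<lambda>(u,v,z). z) y"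
    obtain i where i: "i < m" "x = p i" using X \<open>x \<in> X\<close> by blast
    obtain j where j: "j < m" "y = p j" using X \<open>y \<in> X\<close> by blast
    have e: "(\<lambda>(u,v,z). z) w = zc w" for w :: pt3 by (cases w) (simp add: zc_def)
    have "zc (p i) = zc (p j)" using e i j \<open>(\<lambda>(u,v,z). z) x = (\<lambda>(u,v,z). z) y\<close> by metis
    then show "x = y" using zi i j by auto
  qed
  ultimately show "X \<in> distinct_z_locus \<tau> m" using X by (simp add: distinct_z_locus_def)
qed

lemma L2: "sigma_inv ` prod_Sigma \<tau> m \<delta> \<subseteq> prod_Sigma \<tau> m \<delta>"
proof
  fix Y assume "Y \<in> sigma_inv ` prod_Sigma \<tau> m \<delta>"
  then obtain p where Y: "Y = sg ` p ` {..<m}" and p: "\<forall>i<m. p i \<in> Sigma_arc \<tau> (\<delta> i)"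
    unfolding prod_Sigma_def sigma_inv_sg by blast
  have "Y = (sg \<circ> p) ` {..<m}" using Y by (simp add: image_comp)
  moreover have "\<forall>i<m. (sg \<circ> p) i \<in> Sigma_arc \<tau> (\<delta> i)" using p Sigma_sg by auto
  ultimately show "Y \<in> prod_Sigma \<tau> m \<delta>" unfolding prod_Sigma_def by blast
qed

lemma L3: "{X \<in> prod_Sigma \<tau> m \<delta>. sigma_inv X = X} = sym_to_hilb ` torus_hat \<tau> m \<delta>"
proof
  show "{X \<in> prod_Sigma \<tau> m \<delta>. sigma_inv X = X} \<subseteq> sym_to_hilb ` torus_hat \<tau> m \<delta>"
  proof
    fix X assume "X \<in> {X \<in> prod_Sigma \<tau> m \<delta>. sigma_inv X = X}"
    then obtain p where X: "X = p ` {..<m}" and p: "\<forall>i<m. p i \<in> Sigma_arc \<tau> (\<delta> i)"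
      and fx: "sg ` X = X"
      unfolding prod_Sigma_def sigma_inv_sg by blast
    have zi: "i = j" if "i < m" "j < m" "zc (p i) = zc (p j)" for i j
      using same_idx[OF that(1,2)] Sigma_z p that by metis
    have v0: "fst (snd (p i)) = 0" if "i < m" for i
    proof -
      have "sg (p i) \<in> X" using fx X that by blast
      then obtain j where "j < m" "sg (p i) = p j" using X by auto
      moreover then have "j = i" using zi that sg_zc by metis
      ultimately show ?thesis using sg_fix by metis
    qed
    define q where "q i = (fst (p i), zc (p i))" for i
    have "sym_to_hilb (mset (map q [0..<m])) = (\<lambda>(u,z). (u,0,z)) ` q ` {..<m}"
      by (simp add: sym_to_hilb_def atLeast0LessThan)
    also have "\<dots> = X" unfolding X image_image
    proof (rule image_cong[OF refl])
      fix i assume "i \<in> {..<m}"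
      then show "(\<lambda>(u,z). (u,0,z)) (q i) = p i" using v0[of i] 
        by (cases "p i") (auto simp: q_def zc_def)
    qed
    finally have "sym_to_hilb (mset (map q [0..<m])) = X" .
    moreover have "\<forall>i<m. q i \<in> hat_arc \<tau> (\<delta> i)"
    proof (intro allI impI)
      fix i assume i: "i < m"
      obtain u v z where pi: "p i = (u,v,z)" by (cases "p i")
      have "p i \<in> S_tau \<tau>" "zc (p i) \<in> path_image (\<delta> i)" using p i Sigma_S Sigma_z by blast+
      then show "q i \<in> hat_arc \<tau> (\<delta> i)" using v0[OF i] pi
        by (auto simp: q_def zc_def hat_arc_def S_tau_def algebra_simps eq_neg_iff_add_eq_0)
    qed
    ultimately show "X \<in> sym_to_hilb ` torus_hat \<tau> m \<delta>" unfolding torus_hat_def by blast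
  qed
next
  show "sym_to_hilb ` torus_hat \<tau> m \<delta> \<subseteq> {X \<in> prod_Sigma \<tau> m \<delta>. sigma_inv X = X}"
  proof
    fix X assume "X \<in> sym_to_hilb ` torus_hat \<tau> m \<delta>"
    then obtain q where X: "X = sym_to_hilb (mset (map q [0..<m]))"
      and q: "\<forall>i<m. q i \<in> hat_arc \<tau> (\<delta> i)" unfolding torus_hat_def by blast
    define p where "p i = (fst (q i), 0::complex, snd (q i))" for i
    have Xp: "X = p ` {..<m}"
      unfolding X sym_to_hilb_def by (simp add: atLeast0LessThan image_image p_def case_prod_beta)
    have "\<forall>i<m. p i \<in> Sigma_arc \<tau> (\<delta> i)"
    proof (intro allI impI)
      fix i assume i: "i < m"
      obtain u z where qi: "q i = (u,z)" by (cases "q i")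
      have h: "z \<in> path_image (\<delta> i)" "u\<^sup>2 = - Ptau \<tau> z" using q i qi by (auto simp: hat_arc_def)
      have "(u, 0, z) \<in> S_tau \<tau>" using h by (simp add: S_tau_def)
      moreover have "u = u * of_real 1" "(0::complex) = u * of_real 0" by simp_all
      ultimately show "p i \<in> Sigma_arc \<tau> (\<delta> i)" using h qi unfolding p_def Sigma_arc_def by auto
    qed
    moreover have "sigma_inv X = X" unfolding sigma_inv_sg Xp
      by (auto simp: image_image p_def sg_def)
    ultimately show "X \<in> {X \<in> prod_Sigma \<tau> m \<delta>. sigma_inv X = X}"
      using Xp unfolding prod_Sigma_def by blast
  qed
qed

lemma L4: "torus_hat \<tau> m \<delta> \<subseteq> Sym_Shat \<tau> m - antidiag m"
proof
  fix M assume "M \<in> torus_hat \<tau> m \<delta>"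
  then obtain q where M: "M = mset (map q [0..<m])"
      and q: "\<forall>i<m. q i \<in> hat_arc \<tau> (\<delta> i)" unfolding torus_hat_def by blast
  have qz: "snd (q i) \<in> path_image (\<delta> i)" if "i < m" for i
    using q that by (cases "q i") (auto simp: hat_arc_def)
  have zi: "i = j" if "i < m" "j < m" "snd (q i) = snd (q j)" for i j
    using same_idx[OF that(1,2)] qz that by metis
  have inj: "inj_on q {0..<m}" using zi by (auto simp: inj_on_def)
  have "set_mset M \<subseteq> Shat_tau \<tau>"
  proof
    fix x assume "x \<in># M"
    then obtain i where "i < m" "x = q i" using M by auto
    then show "x \<in> Shat_tau \<tau>" using q
      by (cases x) (force simp: hat_arc_def Shat_tau_def eq_neg_iff_add_eq_0)
  qed
  hence "M \<in> Sym_Shat \<tau> m" using M by (simp add: Sym_Shat_def)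
  moreover have "M \<notin> antidiag m"
  proof
    assume "M \<in> antidiag m"
    then obtain u z where sub: "{#(u,z), (-u,z)#} \<subseteq># M" unfolding antidiag_def by blast
    have dist: "distinct (map q [0..<m])" using inj by (simp add: distinct_map)
    show False
    proof (cases "u = 0")
      case True
      have "count {#(u,z), (-u,z)#} (u,z) = 2" using True by simp
      hence "count M (u,z) \<ge> 2" using sub by (metis mset_subset_eq_count)
      moreover have "count M (u,z) \<le> 1" using dist M by (simp add: distinct_count_atmost_1)
      ultimately show False by simp
    next
      case False
      have "(u,z) \<in># M" "(-u,z) \<in># M" using sub by (auto dest: mset_subset_eqD)
      then obtain i j where "i < m" "j < m" "q i = (u,z)" "q j = (-u,z)" using M by auto
      moreover then have "i = j" using zi by simp
      ultimately show False using False by simp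
    qed
  qed
  ultimately show "M \<in> Sym_Shat \<tau> m - antidiag m" by simp
qed

end

lemma cm_disj: "crossingless_matching \<tau> m \<alpha> \<Longrightarrow> disj m \<alpha>"
  unfolding crossingless_matching_def disj_def by blast

theorem proposition7p2:
  fixes \<tau> :: "complex set" and m :: nat and \<alpha> \<beta> :: "nat \<Rightarrow> real \<Rightarrow> complex"
  assumes "finite \<tau>" and "card \<tau> = 2 * m" and "\<Sum>\<tau> = 0"
    and "crossingless_matching \<tau> m \<alpha>" and "crossingless_matching \<tau> m \<beta>"
  shows "prod_Sigma \<tau> m \<alpha> \<subseteq> distinct_z_locus \<tau> m \<and> prod_Sigma \<tau> m \<beta> \<subseteq> distinct_z_locus \<tau> m \<and>
         sigma_inv ` prod_Sigma \<tau> m \<alpha> \<subseteq> prod_Sigma \<tau> m \<alpha> \<and>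
         sigma_inv ` prod_Sigma \<tau> m \<beta> \<subseteq> prod_Sigma \<tau> m \<beta> \<and>
         {X \<in> prod_Sigma \<tau> m \<alpha>. sigma_inv X = X} = sym_to_hilb ` torus_hat \<tau> m \<alpha> \<and>
         {X \<in> prod_Sigma \<tau> m \<beta>. sigma_inv X = X} = sym_to_hilb ` torus_hat \<tau> m \<beta> \<and>
         torus_hat \<tau> m \<alpha> \<subseteq> Sym_Shat \<tau> m - antidiag m \<and>
         torus_hat \<tau> m \<beta> \<subseteq> Sym_Shat \<tau> m - antidiag m"
  using disj.L1[OF cm_disj[OF assms(4)]] disj.L1[OF cm_disj[OF assms(5)]]
    disj.L2[OF cm_disj[OF assms(4)]] disj.L2[OF cm_disj[OF assms(5)]]
    disj.L3[OF cm_disj[OF assms(4)]] disj.L3[OF cm_disj[OF assms(5)]]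
    disj.L4[OF cm_disj[OF assms(4)]] disj.L4[OF cm_disj[OF assms(5)]]
  by (intro conjI) assumption+

end
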